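(* For every $n \geq 1$, the map $\psi$ restricts to a bijection from $\mathcal{S}^{(2)}_n$, the set of skeletons of 2-connected planar linear normal $\lambda$-terms with $n$ atoms, onto $\mathcal{V}^+_{n-1}$, the set of v-trees with $n-1$ edges having no label equal to $0$.
   Context: $\lambda$-terms, linear (closed, each abstraction binds exactly one atom), normal (no sub-term $(\lambda x.u)\,v$) and planar terms are standard; the skeleton is the plane unary-binary tree (atom $\mapsto$ leaf, application $u\,v \mapsto$ binary node with left subtree from $u$ and right from $v$, abstraction $\mapsto$ unary node). The diagram replaces each leaf by an edge from its parent to the binding unary node, drawn counter-clockwise and entering from the right; planar means this can be done without crossings; the term is 2-connected if the diagram is 2-edge-connected. For a unary-binary tree $S$ and node $u$, $S_u$ is the subtree at $u$; $\operatorname{leaf}, \operatorname{unary}$ count leaves and unary nodes. The map $\psi$: for a skeleton $S$ of a planar linear normal term, let $T$ be the plane tree whose nodes are a new root $r$ and the binary nodes of $S$. For a node $u$ of $T$, let $R(u)$ be the right subtree of $u$ in $S$ if $u$ is binary, and $R(r)=S$. The children of $u$ in $T$, left to right, are $x_1,\ldots,x_m$ where $x_1$ is the first binary node of $R(u)$ reached from its root through a (possibly empty) chain of unary nodes, and $x_{i+1}$ is the left child of $x_i$ in $S$ as long as it is binary. Label each binary node $u$ by $\operatorname{leaf}(S_v)-\operatorname{unary}(S_v)$ with $v$ its right child, and $r$ by $\operatorname{leaf}(S_w)-\operatorname{unary}(S_w)$ with $w$ the first non-unary node of $S$. Set $\psi(S)=(T,\ell)$. A v-tree is a plane tree with integer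 node labels $\ell$ such that: (i) leaves have label $0$ or $1$; (ii) every non-root node $u$ with children $v_1,\ldots,v_k$ satisfies $0 \le \ell(u) \le 1+\sum_i \ell(v_i)$; (iii) the root $r$ with children $v_1,\ldots,v_k$ satisfies $\ell(r) = 1+\sum_i \ell(v_i)$. Size = number of edges. *)

theory Defs
  imports Main
begin

datatype lterm = Var nat | Lam nat lterm | App lterm lterm

fun occ :: "nat \<Rightarrow> lterm \<Rightarrow> nat" where
  "occ x (Var y) = (if x = y then 1 else 0)"
| "occ x (Lam y t) = (if x = y then 0 else occ x t)"
| "occ x (App t u) = occ x t + occ x u"

definition closed_term :: "lterm \<Rightarrow> bool" where
  "closed_term t \<longleftrightarrow> (\<forall>x. occ x t = 0)"

fun abs_linear :: "lterm \<Rightarrow> bool" where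
  "abs_linear (Var x) = True"
| "abs_linear (Lam x t) = (occ x t = 1 \<and> abs_linear t)"
| "abs_linear (App t u) = (abs_linear t \<and> abs_linear u)"

definition linear_term :: "lterm \<Rightarrow> bool" where
  "linear_term t \<longleftrightarrow> closed_term t \<and> abs_linear t"

fun normal_term :: "lterm \<Rightarrow> bool" where
  "normal_term (Var x) = True"
| "normal_term (Lam x t) = normal_term t"
| "normal_term (App t u) = ((\<forall>x s. t \<noteq> Lam x s) \<and> normal_term t \<and> normal_term u)"

fun atoms :: "lterm \<Rightarrow> nat" where
  "atoms (Var x) = 1"
| "atoms (Lam x t) = atoms t"
| "atoms (App t u) = atoms t + atoms u"

text \<open>Planarity, via the standard ordered (non-commutative) linear typing discipline:
  a context is an ordered list of variables; abstraction appends the bound variable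
  at the right end of the context, and an application splits its context into a
  left part (for the function) and a right part (for the argument).\<close>
inductive planar_ctx :: "nat list \<Rightarrow> lterm \<Rightarrow> bool" where
  pvar: "planar_ctx [x] (Var x)"
| plam: "x \<notin> set \<Gamma> \<Longrightarrow> planar_ctx (\<Gamma> @ [x]) t \<Longrightarrow> planar_ctx \<Gamma> (Lam x t)"
| papp: "planar_ctx \<Gamma> t \<Longrightarrow> planar_ctx \<Delta> u \<Longrightarrow> planar_ctx (\<Gamma> @ \<Delta>) (App t u)"

definition planar_term :: "lterm \<Rightarrow> bool" where
  "planar_term t \<longleftrightarrow> planar_ctx [] t"

datatype utree = LNode | UNode utree | BNode utree utree

fun skel :: "lterm \<Rightarrow> utree" where
  "skel (Var x) = LNode"
| "skel (Lam x t) = UNode (skel t)"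
| "skel (App t u) = BNode (skel t) (skel u)"

fun leaf_count :: "utree \<Rightarrow> nat" where
  "leaf_count LNode = 1"
| "leaf_count (UNode s) = leaf_count s"
| "leaf_count (BNode a b) = leaf_count a + leaf_count b"

fun unary_count :: "utree \<Rightarrow> nat" where
  "unary_count LNode = 0"
| "unary_count (UNode s) = Suc (unary_count s)"
| "unary_count (BNode a b) = unary_count a + unary_count b"

text \<open>Nodes of a term are addressed by paths (child indices from the root).
  The vertices of the diagram are the non-leaf nodes (abstractions and applications).\<close>
type_synonym path = "nat list"

fun diag_vertices :: "path \<Rightarrow> lterm \<Rightarrow> path set" where
  "diag_vertices p (Var x) = {}"
| "diag_vertices p (Lam x t) = insert p (diag_vertices (p @ [0]) t)"
| "diag_vertices p (App t u) = insert p (diag_vertices (p @ [0]) t \<union> diag_vertices (p @ [1]) u)"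

text \<open>The edge from a node at path p to its i-th child c: a tree edge if c is not a leaf,
  otherwise (c an atom x) the edge from p to the abstraction binding x
  (env maps each variable to the path of its binding abstraction).\<close>
fun child_edge :: "(nat \<Rightarrow> path) \<Rightarrow> path \<Rightarrow> nat \<Rightarrow> lterm \<Rightarrow> path \<times> path" where
  "child_edge env p i (Var x) = (p, env x)"
| "child_edge env p i c = (p, p @ [i])"

text \<open>Edge list (a multigraph: edges may repeat, loops allowed).\<close>
fun diag_edges :: "(nat \<Rightarrow> path) \<Rightarrow> path \<Rightarrow> lterm \<Rightarrow> (path \<times> path) list" where
  "diag_edges env p (Var x) = []"
| "diag_edges env p (Lam x t) =
     child_edge (env(x := p)) p 0 t # diag_edges (env(x := p)) (p @ [0]) t"
| "diag_edges env p (App t u) =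
     [child_edge env p 0 t, child_edge env p 1 u] @ diag_edges env (p @ [0]) t @ diag_edges env (p @ [1]) u"

definition diagram_vertices :: "lterm \<Rightarrow> path set" where
  "diagram_vertices t = diag_vertices [] t"

definition diagram_edges :: "lterm \<Rightarrow> (path \<times> path) list" where
  "diagram_edges t = diag_edges (\<lambda>_. []) [] t"

definition mg_connected :: "'v set \<Rightarrow> ('v \<times> 'v) list \<Rightarrow> bool" where
  "mg_connected V E \<longleftrightarrow>
     (\<forall>a\<in>V. \<forall>b\<in>V. (a, b) \<in> ({(x, y). (x, y) \<in> set E \<or> (y, x) \<in> set E})\<^sup>*)"

definition two_edge_connected :: "'v set \<Rightarrow> ('v \<times> 'v) list \<Rightarrow> bool" where
  "two_edge_connected V E \<longleftrightarrow>
     mg_connected V E \<and> (\<forall>i < length E. mg_connected V (take i E @ drop (Suc i) E))"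

definition two_connected_term :: "lterm \<Rightarrow> bool" where
  "two_connected_term t \<longleftrightarrow> two_edge_connected (diagram_vertices t) (diagram_edges t)"

definition S2 :: "nat \<Rightarrow> utree set" where
  "S2 n = {skel t | t. linear_term t \<and> normal_term t \<and> planar_term t
                       \<and> two_connected_term t \<and> atoms t = n}"

datatype 'a ptree = Node 'a "'a ptree list"

fun root_label :: "'a ptree \<Rightarrow> 'a" where
  "root_label (Node l ks) = l"

fun tree_edges :: "'a ptree \<Rightarrow> nat" where
  "tree_edges (Node l ks) = length ks + sum_list (map tree_edges ks)"

fun labels :: "'a ptree \<Rightarrow> 'a set" where
  "labels (Node l ks) = insert l (\<Union>k\<in>set ks. labels k)"

text \<open>Conditions (i) and (ii) for a non-root node and all its descendants.\<close>
fun vt_nonroot :: "int ptree \<Rightarrow> bool" where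
  "vt_nonroot (Node l ks) =
     ((ks = [] \<longrightarrow> l = 0 \<or> l = 1) \<and> 0 \<le> l \<and> l \<le> 1 + sum_list (map root_label ks)
      \<and> (\<forall>k\<in>set ks. vt_nonroot k))"

fun is_vtree :: "int ptree \<Rightarrow> bool" where
  "is_vtree (Node l ks) =
     ((ks = [] \<longrightarrow> l = 0 \<or> l = 1) \<and> l = 1 + sum_list (map root_label ks)
      \<and> (\<forall>k\<in>set ks. vt_nonroot k))"

definition Vplus :: "nat \<Rightarrow> int ptree set" where
  "Vplus m = {T. is_vtree T \<and> tree_edges T = m \<and> 0 \<notin> labels T}"

definition lab :: "utree \<Rightarrow> int" where
  "lab s = int (leaf_count s) - int (unary_count s)"

fun first_nonunary :: "utree \<Rightarrow> utree" where
  "first_nonunary (UNode s) = first_nonunary s"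
| "first_nonunary s = s"

text \<open>psi_kids s: the list of T-children of a node u with R(u) = s.\<close>
fun psi_kids :: "utree \<Rightarrow> int ptree list" where
  "psi_kids LNode = []"
| "psi_kids (UNode s) = psi_kids s"
| "psi_kids (BNode a b) =
     Node (lab b) (psi_kids b) # (case a of BNode _ _ \<Rightarrow> psi_kids a | _ \<Rightarrow> [])"

definition psi :: "utree \<Rightarrow> int ptree" where
  "psi S = Node (lab (first_nonunary S)) (psi_kids S)"

end

theory Submission
  imports Defs "HOL-Library.Sublist"
begin


lemma planar_occ: "planar_ctx G t \<Longrightarrow> occ x t = count_list G x"
  by (induction rule: planar_ctx.induct) (auto simp: count_list_0_iff)

lemma planar_lab: "planar_ctx G t \<Longrightarrow> int (leaf_count (skel t)) - int (unary_count (skel t)) = int (length G)"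
  by (induction rule: planar_ctx.induct) auto

lemma planar_linear: "planar_ctx G t \<Longrightarrow> abs_linear t"
proof (induction rule: planar_ctx.induct)
  case (plam x G t)
  then show ?case using planar_occ[OF plam(2), of x] by (simp add: count_list_0_iff)
qed auto

lemma atoms_leaf: "leaf_count (skel t) = atoms t"
  by (induction t) auto

fun hasfree :: "lterm \<Rightarrow> bool" where
  "hasfree t = (\<exists>z. occ z t > 0)"

declare hasfree.simps[simp del]

fun fv_ok :: "lterm \<Rightarrow> bool" where
  "fv_ok (Var x) = True"
| "fv_ok (Lam x t) = (hasfree t \<and> fv_ok t)"
| "fv_ok (App t u) = (hasfree t \<and> hasfree u \<and> fv_ok t \<and> fv_ok u)"

fun isvar :: "lterm \<Rightarrow> bool" where
  "isvar (Var x) = True"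
| "isvar _ = False"

lemma ce_nonvar: "\<not> isvar t \<Longrightarrow> child_edge env p i t = (p, p @ [i])"
  by (cases t) auto

lemma dv_nonvar: "\<not> isvar t \<Longrightarrow> p \<in> diag_vertices p t"
  by (cases t) auto

lemma dv_ne: "v \<in> diag_vertices p t \<Longrightarrow> \<not> isvar t"
  by (cases t) auto

lemma dv_prefix: "v \<in> diag_vertices p t \<Longrightarrow> prefix p v"
  by (induction t arbitrary: p) (auto dest!: append_prefixD)

lemma endp:
  "e \<in> set (diag_edges env p t) \<Longrightarrow>
    fst e \<in> diag_vertices p t \<and> (snd e \<in> diag_vertices p t \<or> (\<exists>x. occ x t > 0 \<and> snd e = env x))"
proof (induction t arbitrary: env p)
  case (Var x)
  then show ?case by simp
next
  case (Lam y t)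
  let ?env = "env(y := p)"
  show ?case
  proof (cases "e = child_edge ?env p 0 t")
    case True
    then show ?thesis
      by (cases t) (auto simp: dv_nonvar)
  next
    case False
    then have "e \<in> set (diag_edges ?env (p @ [0]) t)" using Lam.prems by simp
    from Lam.IH[OF this] show ?thesis by (auto split: if_splits)
  qed
next
  case (App t u)
  consider "e = child_edge env p 0 t" | "e = child_edge env p 1 u"
    | "e \<in> set (diag_edges env (p @ [0]) t)" | "e \<in> set (diag_edges env (p @ [1]) u)"
    using App.prems by auto
  then show ?case
  proof cases
    case 1 then show ?thesis by (cases t) (auto simp: dv_nonvar)
  next
    case 2 then show ?thesis by (cases u) (auto simp: dv_nonvar)
  next
    case 3 from App.IH(1)[OF this] show ?thesis by auto
  next
    case 4 from App.IH(2)[OF this] show ?thesis by auto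
  qed
qed

lemma F1:
  "v \<in> diag_vertices p t \<Longrightarrow> v \<noteq> p \<Longrightarrow>
    butlast v \<in> diag_vertices p t \<and> (butlast v, v) \<in> set (diag_edges env p t)"
proof (induction t arbitrary: env p)
  case (Var x)
  then show ?case by simp
next
  case (Lam y t)
  then have v: "v \<in> diag_vertices (p @ [0]) t" by simp
  show ?case
  proof (cases "v = p @ [0]")
    case True
    then show ?thesis using dv_ne[OF v] by (simp add: ce_nonvar)
  next
    case False
    from Lam.IH[OF v False] show ?thesis by auto
  qed
next
  case (App t u)
  then consider "v \<in> diag_vertices (p @ [0]) t" | "v \<in> diag_vertices (p @ [1]) u" by auto
  then show ?case
  proof cases
    case 1
    show ?thesis
    proof (cases "v = p @ [0]")
      case True
      then show ?thesis using dv_ne[OF 1] by (simp add: ce_nonvar)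
    next
      case False
      from App.IH(1)[OF 1 False] show ?thesis by auto
    qed
  next
    case 2
    show ?thesis
    proof (cases "v = p @ [1]")
      case True
      then show ?thesis using dv_ne[OF 2] by (simp add: ce_nonvar)
    next
      case False
      from App.IH(2)[OF 2 False] show ?thesis by auto
    qed
  qed
qed

lemma F3:
  "occ x t > 0 \<Longrightarrow> \<not> isvar t \<Longrightarrow>
    \<exists>w. (w, env x) \<in> set (diag_edges env p t) \<and> prefix p w"
proof (induction t arbitrary: env p)
  case (Var y)
  then show ?case by simp
next
  case (Lam y t)
  then have xy: "x \<noteq> y" and o: "occ x t > 0" by (auto split: if_splits)
  show ?case
  proof (cases t)
    case (Var z)
    then show ?thesis using o xy by (intro exI[of _ p]) (auto split: if_splits)
  next
    case (Lam z s)
    then have "\<not> isvar t" by simp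
    from Lam.IH[OF o this, of "env(y := p)" "p @ [0]"] obtain w where
      w: "(w, (env(y := p)) x) \<in> set (diag_edges (env(y := p)) (p @ [0]) t)" "prefix (p @ [0]) w" by blast
    have "(w, env x) \<in> set (diag_edges env p (Lam y t))" using w(1) xy by simp
    moreover have "prefix p w" using w(2) by (auto dest: append_prefixD)
    ultimately show ?thesis by blast
  next
    case (App t1 t2)
    then have "\<not> isvar t" by simp
    from Lam.IH[OF o this, of "env(y := p)" "p @ [0]"] obtain w where
      w: "(w, (env(y := p)) x) \<in> set (diag_edges (env(y := p)) (p @ [0]) t)" "prefix (p @ [0]) w" by blast
    have "(w, env x) \<in> set (diag_edges env p (Lam y t))" using w(1) xy by simp
    moreover have "prefix p w" using w(2) by (auto dest: append_prefixD)
    ultimately show ?thesis by blast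
  qed
next
  case (App t u)
  show ?case
  proof (cases "occ x t > 0")
    case True
    show ?thesis
    proof (cases "isvar t")
      case True
      then obtain z where "t = Var z" by (cases t) auto
      then show ?thesis using \<open>occ x t > 0\<close> by (intro exI[of _ p]) (auto split: if_splits)
    next
      case False
      from App.IH(1)[OF \<open>occ x t > 0\<close> False, of env "p @ [0]"] show ?thesis
        by (fastforce dest: append_prefixD)
    qed
  next
    case False
    then have o: "occ x u > 0" using App.prems by simp
    show ?thesis
    proof (cases "isvar u")
      case True
      then obtain z where "u = Var z" by (cases u) auto
      then show ?thesis using o by (intro exI[of _ p]) (auto split: if_splits)
    next
      case False
      from App.IH(2)[OF o False, of env "p @ [1]"] show ?thesis
        by (fastforce dest: append_prefixD)
    qed
  qed
qed


lemma sp_snoc: "strict_prefix p (p @ [i])"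
  by (simp add: strict_prefix_def)

lemma sp_trans_snoc: "strict_prefix a p \<Longrightarrow> strict_prefix a (p @ [i])"
  by (rule prefix_order.less_trans[OF _ sp_snoc])

lemma sp_of_prefix: "strict_prefix a p \<Longrightarrow> prefix p v \<Longrightarrow> strict_prefix a v"
  by (rule prefix_order.less_le_trans)

lemma F4:
  "v \<in> diag_vertices p t \<Longrightarrow> v \<noteq> p \<Longrightarrow> fv_ok t \<Longrightarrow>
   (\<forall>x. occ x t > 0 \<longrightarrow> strict_prefix (env x) p) \<Longrightarrow>
   \<exists>w b. (w, b) \<in> set (diag_edges env p t) \<and> prefix v w \<and> strict_prefix b v
      \<and> (b \<in> diag_vertices p t \<or> (\<exists>x. occ x t > 0 \<and> b = env x))"
proof (induction t arbitrary: env p)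
  case (Var x)
  then show ?case by simp
next
  case (Lam y t)
  let ?env = "env(y := p)"
  have v: "v \<in> diag_vertices (p @ [0]) t" using Lam.prems by simp
  have fv: "hasfree t" "fv_ok t" using Lam.prems by auto
  have envp: "\<forall>x. occ x t > 0 \<longrightarrow> strict_prefix (?env x) (p @ [0])"
  proof (intro allI impI)
    fix x assume "occ x t > 0"
    show "strict_prefix (?env x) (p @ [0])"
    proof (cases "x = y")
      case True then show ?thesis by (simp add: sp_snoc)
    next
      case False
      then have "occ x (Lam y t) > 0" using \<open>occ x t > 0\<close> by simp
      then show ?thesis using Lam.prems(4) False by (simp add: sp_trans_snoc)
    qed
  qed
  have pv: "prefix (p @ [0]) v" using dv_prefix[OF v] .
  show ?case
  proof (cases "v = p @ [0]")
    case True
    obtain z where z: "occ z t > 0" using fv(1) by (auto simp: hasfree.simps)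
    obtain w where w: "(w, ?env z) \<in> set (diag_edges ?env (p @ [0]) t)" "prefix (p @ [0]) w"
      using F3[OF z dv_ne[OF v]] by blast
    have E: "(w, ?env z) \<in> set (diag_edges env p (Lam y t))" using w(1) by simp
    show ?thesis
    proof (cases "z = y")
      case True
      then have E': "(w, p) \<in> set (diag_edges env p (Lam y t))" using E by simp
      have s: "strict_prefix p v" using \<open>v = p @ [0]\<close> sp_snoc by simp
      have pv: "prefix v w" using w(2) \<open>v = p @ [0]\<close> by simp
      have "p \<in> diag_vertices p (Lam y t)" by simp
      then show ?thesis using E' s pv by blast
    next
      case False
      then have o: "occ z (Lam y t) > 0" using z by simp
      then have s: "strict_prefix (env z) v" using Lam.prems(4) \<open>v = p @ [0]\<close> by (simp add: sp_trans_snoc)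
      have E': "(w, env z) \<in> set (diag_edges env p (Lam y t))" using E False by simp
      have pv: "prefix v w" using w(2) \<open>v = p @ [0]\<close> by simp
      show ?thesis using E' s pv o by blast
    qed
  next
    case False
    from Lam.IH[OF v False fv(2) envp] obtain w b where wb:
      "(w, b) \<in> set (diag_edges ?env (p @ [0]) t)" "prefix v w" "strict_prefix b v"
      "b \<in> diag_vertices (p @ [0]) t \<or> (\<exists>x. occ x t > 0 \<and> b = ?env x)" by blast
    have E: "(w, b) \<in> set (diag_edges env p (Lam y t))" using wb(1) by simp
    have "b \<in> diag_vertices p (Lam y t) \<or> (\<exists>x. occ x (Lam y t) > 0 \<and> b = env x)"
    proof (cases "b \<in> diag_vertices (p @ [0]) t")
      case True then show ?thesis by simp
    next
      case False
      then obtain x where x: "occ x t > 0" "b = ?env x" using wb(4) by blast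
      show ?thesis
      proof (cases "x = y")
        case True then have "b = p" using x by simp
        then show ?thesis by simp
      next
        case False then have "occ x (Lam y t) > 0" "b = env x" using x by auto
        then show ?thesis by blast
      qed
    qed
    then show ?thesis using E wb by blast
  qed
next
  case (App t u)
  have fv: "hasfree t" "hasfree u" "fv_ok t" "fv_ok u" using App.prems by auto
  have envt: "\<forall>x. occ x t > 0 \<longrightarrow> strict_prefix (env x) (p @ [0])"
    using App.prems(4) by (simp add: sp_trans_snoc)
  have envu: "\<forall>x. occ x u > 0 \<longrightarrow> strict_prefix (env x) (p @ [1])"
    using App.prems(4) by (simp add: sp_trans_snoc)
  consider "v \<in> diag_vertices (p @ [0]) t" | "v \<in> diag_vertices (p @ [1]) u" using App.prems by auto
  then show ?case
  proof cases
    case 1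
    show ?thesis
    proof (cases "v = p @ [0]")
      case True
      obtain z where z: "occ z t > 0" using fv(1) by (auto simp: hasfree.simps)
      obtain w where w: "(w, env z) \<in> set (diag_edges env (p @ [0]) t)" "prefix (p @ [0]) w"
        using F3[OF z dv_ne[OF 1]] by blast
      have E: "(w, env z) \<in> set (diag_edges env p (App t u))" using w(1) by simp
      have s: "strict_prefix (env z) v" using envt z True by simp
      have pv: "prefix v w" using w(2) True by simp
      have o: "occ z (App t u) > 0" using z by simp
      show ?thesis using E s pv o by blast
    next
      case False
      from App.IH(1)[OF 1 False fv(3) envt] obtain w b where wb:
        "(w, b) \<in> set (diag_edges env (p @ [0]) t)" "prefix v w" "strict_prefix b v"
        "b \<in> diag_vertices (p @ [0]) t \<or> (\<exists>x. occ x t > 0 \<and> b = env x)" by blast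
      have E: "(w, b) \<in> set (diag_edges env p (App t u))" using wb(1) by simp
      have "b \<in> diag_vertices p (App t u) \<or> (\<exists>x. occ x (App t u) > 0 \<and> b = env x)"
        using wb(4) by auto
      then show ?thesis using E wb by blast
    qed
  next
    case 2
    show ?thesis
    proof (cases "v = p @ [1]")
      case True
      obtain z where z: "occ z u > 0" using fv(2) by (auto simp: hasfree.simps)
      obtain w where w: "(w, env z) \<in> set (diag_edges env (p @ [1]) u)" "prefix (p @ [1]) w"
        using F3[OF z dv_ne[OF 2]] by blast
      have E: "(w, env z) \<in> set (diag_edges env p (App t u))" using w(1) by simp
      have s: "strict_prefix (env z) v" using envu z True by simp
      have pv: "prefix v w" using w(2) True by simp
      have o: "occ z (App t u) > 0" using z by simp
      show ?thesis using E s pv o by blast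
    next
      case False
      from App.IH(2)[OF 2 False fv(4) envu] obtain w b where wb:
        "(w, b) \<in> set (diag_edges env (p @ [1]) u)" "prefix v w" "strict_prefix b v"
        "b \<in> diag_vertices (p @ [1]) u \<or> (\<exists>x. occ x u > 0 \<and> b = env x)" by blast
      have E: "(w, b) \<in> set (diag_edges env p (App t u))" using wb(1) by simp
      have "b \<in> diag_vertices p (App t u) \<or> (\<exists>x. occ x (App t u) > 0 \<and> b = env x)"
        using wb(4) by auto
      then show ?thesis using E wb by blast
    qed
  qed
qed


section \<open>2-edge-connectivity from fv_ok\<close>

definition srel :: "('v \<times> 'v) set \<Rightarrow> ('v \<times> 'v) set" where
  "srel E = {(x, y). (x, y) \<in> E \<or> (y, x) \<in> E}"

lemma srel_sym: "(x, y) \<in> (srel E)\<^sup>* \<Longrightarrow> (y, x) \<in> (srel E)\<^sup>*"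
proof (induction rule: rtrancl_induct)
  case base then show ?case by simp
next
  case (step y z)
  then have "(z, y) \<in> srel E" by (auto simp: srel_def)
  then show ?case using step.IH by (meson converse_rtrancl_into_rtrancl)
qed

lemma srel_mono: "E \<subseteq> E' \<Longrightarrow> (x, y) \<in> (srel E)\<^sup>* \<Longrightarrow> (x, y) \<in> (srel E')\<^sup>*"
proof -
  assume "E \<subseteq> E'" "(x, y) \<in> (srel E)\<^sup>*"
  moreover have "srel E \<subseteq> srel E'" using \<open>E \<subseteq> E'\<close> by (auto simp: srel_def)
  ultimately show ?thesis using rtrancl_mono by blast
qed

lemma down_path:
  assumes F: "\<forall>z\<in>V. z \<noteq> [] \<longrightarrow> butlast z \<in> V \<and> (butlast z, z) \<in> E"
    and se: "snd e = v"
  shows "v @ d \<in> V \<Longrightarrow> (v, v @ d) \<in> (srel (E - {e}))\<^sup>*"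
proof (induction d rule: rev_induct)
  case Nil
  then show ?case by simp
next
  case (snoc j d)
  let ?z = "v @ d @ [j]"
  have z: "?z \<in> V" "?z \<noteq> []" using snoc.prems by auto
  have bz: "butlast ?z = v @ d" by (simp flip: append_assoc)
  have "v @ d \<in> V" "(v @ d, ?z) \<in> E" using F z bz by (metis append_assoc)+
  moreover have "(v @ d, ?z) \<noteq> e"
  proof
    assume "(v @ d, ?z) = e"
    then have "snd e = ?z" by auto
    with se show False by simp
  qed
  ultimately have "(v @ d, ?z) \<in> srel (E - {e})" by (auto simp: srel_def)
  moreover have "(v, v @ d) \<in> (srel (E - {e}))\<^sup>*" using snoc.IH \<open>v @ d \<in> V\<close> by blast
  ultimately show ?case by (metis append_assoc rtrancl.rtrancl_into_rtrancl)
qed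

lemma conn_to_root:
  assumes F: "\<forall>z\<in>V. z \<noteq> [] \<longrightarrow> butlast z \<in> V \<and> (butlast z, z) \<in> E"
    and G: "\<forall>v\<in>V. v \<noteq> [] \<longrightarrow> (\<exists>w b. (w, b) \<in> E \<and> prefix v w \<and> strict_prefix b v \<and> b \<in> V \<and> w \<in> V)"
  shows "v \<in> V \<Longrightarrow> (v, []) \<in> (srel (E - {e}))\<^sup>*"
proof (induction "length v" arbitrary: v rule: less_induct)
  case less
  show ?case
  proof (cases "v = []")
    case True then show ?thesis by simp
  next
    case False
    have bv: "butlast v \<in> V" "(butlast v, v) \<in> E" using F less.prems False by auto
    have lb: "length (butlast v) < length v" using False by simp
    show ?thesis
    proof (cases "e = (butlast v, v)")
      case False
      then have "(v, butlast v) \<in> srel (E - {e})" using bv by (auto simp: srel_def)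
      moreover have "(butlast v, []) \<in> (srel (E - {e}))\<^sup>*" using less.hyps[OF lb bv(1)] .
      ultimately show ?thesis by (meson converse_rtrancl_into_rtrancl)
    next
      case True
      obtain w b where wb: "(w, b) \<in> E" "prefix v w" "strict_prefix b v" "b \<in> V" "w \<in> V"
        using G less.prems \<open>v \<noteq> []\<close> by blast
      obtain d where d: "w = v @ d" using wb(2) prefixE by blast
      have "length w \<ge> length v" using d by simp
      then have "(w, b) \<noteq> e" using True lb by auto
      then have s1: "(w, b) \<in> srel (E - {e})" using wb(1) by (auto simp: srel_def)
      have s2: "(v, w) \<in> (srel (E - {e}))\<^sup>*"
        using down_path[OF F, of e v d] True wb(5) d by simp
      have lbv: "length b < length v" using wb(3) prefix_length_less by blast
      have s3: "(b, []) \<in> (srel (E - {e}))\<^sup>*" using less.hyps[OF lbv wb(4)] .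
      from s2 s1 s3 show ?thesis by (meson rtrancl.rtrancl_into_rtrancl rtrancl_trans)
    qed
  qed
qed

lemma set_remove_nth:
  assumes "i < length xs" "x \<in> set xs" "x \<noteq> xs ! i"
  shows "x \<in> set (take i xs @ drop (Suc i) xs)"
proof -
  have "x \<in> set (take i xs @ xs ! i # drop (Suc i) xs)"
    by (subst id_take_nth_drop[OF assms(1), symmetric]) (rule assms(2))
  then show ?thesis using assms(3) by auto
qed

lemma mg_conn_of:
  assumes "\<forall>v\<in>V. (v, []) \<in> (srel (set E - {e}))\<^sup>*"
  and "set E - {e} \<subseteq> set E'"
  shows "mg_connected V E'"
  unfolding mg_connected_def
proof (intro ballI)
  fix a b assume ab: "a \<in> V" "b \<in> V"
  have "(a, []) \<in> (srel (set E'))\<^sup>*" using srel_mono[OF assms(2)] assms(1) ab by blast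
  moreover have "(b, []) \<in> (srel (set E'))\<^sup>*" using srel_mono[OF assms(2)] assms(1) ab by blast
  then have "([], b) \<in> (srel (set E'))\<^sup>*" by (rule srel_sym)
  ultimately have "(a, b) \<in> (srel (set E'))\<^sup>*" by (rule rtrancl_trans)
  then show "(a, b) \<in> {(x, y). (x, y) \<in> set E' \<or> (y, x) \<in> set E'}\<^sup>*" by (simp add: srel_def)
qed

lemma fv_ok_two_conn:
  assumes cl: "\<forall>x. occ x t = 0" and fv: "fv_ok t"
  shows "two_connected_term t"
proof -
  let ?V = "diag_vertices [] t"
  let ?L = "diag_edges (\<lambda>_. []) [] t"
  have F: "\<forall>z\<in>?V. z \<noteq> [] \<longrightarrow> butlast z \<in> ?V \<and> (butlast z, z) \<in> set ?L"
    using F1 by blast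
  have G: "\<forall>v\<in>?V. v \<noteq> [] \<longrightarrow> (\<exists>w b. (w, b) \<in> set ?L \<and> prefix v w \<and> strict_prefix b v \<and> b \<in> ?V \<and> w \<in> ?V)"
  proof (intro ballI impI)
    fix v assume v: "v \<in> ?V" "v \<noteq> []"
    obtain w b where wb: "(w, b) \<in> set ?L" "prefix v w" "strict_prefix b v"
      "b \<in> ?V \<or> (\<exists>x. occ x t > 0 \<and> b = [])"
      using F4[OF v fv, of "\<lambda>_. []"] cl by auto
    have "b \<in> ?V" using wb(4) cl by auto
    moreover have "w \<in> ?V" using endp[OF wb(1)] by simp
    ultimately show "\<exists>w b. (w, b) \<in> set ?L \<and> prefix v w \<and> strict_prefix b v \<and> b \<in> ?V \<and> w \<in> ?V"
      using wb by blast
  qed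
  have C: "\<And>e. \<forall>v\<in>?V. (v, []) \<in> (srel (set ?L - {e}))\<^sup>*"
    using conn_to_root[OF F G] by blast
  have "mg_connected ?V ?L" using mg_conn_of[OF C[of undefined]] by blast
  moreover have "\<forall>i < length ?L. mg_connected ?V (take i ?L @ drop (Suc i) ?L)"
  proof (intro allI impI)
    fix i assume i: "i < length ?L"
    have "set ?L - {?L ! i} \<subseteq> set (take i ?L @ drop (Suc i) ?L)"
      using set_remove_nth[OF i] by blast
    then show "mg_connected ?V (take i ?L @ drop (Suc i) ?L)" using mg_conn_of[OF C] by blast
  qed
  ultimately show ?thesis
    by (simp add: two_connected_term_def two_edge_connected_def diagram_vertices_def diagram_edges_def)
qed


section \<open>fv_ok from 2-edge-connectivity\<close>

fun sub :: "lterm \<Rightarrow> path \<Rightarrow> lterm option" where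
  "sub t [] = Some t"
| "sub (Var x) (i # q) = None"
| "sub (Lam x t) (i # q) = (if i = 0 then sub t q else None)"
| "sub (App t u) (i # q) = (if i = 0 then sub t q else if i = 1 then sub u q else None)"

definition cross :: "path \<Rightarrow> path \<times> path \<Rightarrow> bool" where
  "cross v e \<longleftrightarrow> (prefix v (fst e) \<noteq> prefix v (snd e))"

lemma closed_nonvar:
  assumes "\<forall>z. occ z s = 0" shows "\<not> isvar s"
proof (cases s)
  case (Var x)
  then have "occ x s = 1" by simp
  then show ?thesis using assms by simp
qed auto

lemma nfv: "\<not> fv_ok t \<Longrightarrow> \<exists>q s. q \<noteq> [] \<and> sub t q = Some s \<and> (\<forall>z. occ z s = 0)"
proof (induction t)
  case (Var x)
  then show ?case by simp
next
  case (Lam y t)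
  show ?case
  proof (cases "hasfree t")
    case False
    then show ?thesis by (intro exI[of _ "[0]"] exI[of _ t]) (auto simp: hasfree.simps)
  next
    case True
    then have "\<not> fv_ok t" using Lam.prems by simp
    then obtain q s where "q \<noteq> []" "sub t q = Some s" "\<forall>z. occ z s = 0" using Lam.IH by blast
    then show ?thesis by (intro exI[of _ "0 # q"] exI[of _ s]) auto
  qed
next
  case (App t u)
  show ?case
  proof (cases "hasfree t")
    case False
    then show ?thesis by (intro exI[of _ "[0]"] exI[of _ t]) (auto simp: hasfree.simps)
  next
    case True
    show ?thesis
    proof (cases "hasfree u")
      case False
      then show ?thesis by (intro exI[of _ "[1]"] exI[of _ u]) (auto simp: hasfree.simps)
    next
      case True2: True
      show ?thesis
      proof (cases "fv_ok t")
        case False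
        then obtain q s where "q \<noteq> []" "sub t q = Some s" "\<forall>z. occ z s = 0" using App.IH(1) by blast
        then show ?thesis by (intro exI[of _ "0 # q"] exI[of _ s]) auto
      next
        case True3: True
        then have "\<not> fv_ok u" using App.prems True True2 by simp
        then obtain q s where "q \<noteq> []" "sub u q = Some s" "\<forall>z. occ z s = 0" using App.IH(2) by blast
        then show ?thesis by (intro exI[of _ "1 # q"] exI[of _ s]) auto
      qed
    qed
  qed
qed

lemma sub_vertex: "sub t q = Some s \<Longrightarrow> \<not> isvar s \<Longrightarrow> p @ q \<in> diag_vertices p t"
proof (induction t arbitrary: p q)
  case (Var x)
  then show ?case by (cases q) auto
next
  case (Lam y t)
  then show ?case
  proof (cases q)
    case Nil then show ?thesis using Lam.prems by auto
  next
    case (Cons i q')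
    then have "i = 0" "sub t q' = Some s" using Lam.prems by (auto split: if_splits)
    then show ?thesis using Lam.IH[of q' "p @ [0]"] Lam.prems Cons by simp
  qed
next
  case (App t u)
  then show ?case
  proof (cases q)
    case Nil then show ?thesis using App.prems by auto
  next
    case (Cons i q')
    then have "(i = 0 \<and> sub t q' = Some s) \<or> (i = 1 \<and> sub u q' = Some s)" using App.prems by (auto split: if_splits)
    then show ?thesis using App.IH(1)[of q' "p @ [0]"] App.IH(2)[of q' "p @ [1]"] App.prems Cons by auto
  qed
qed

lemma C0:
  assumes "\<not> prefix v p" "\<not> prefix p v" "\<forall>x. occ x t > 0 \<longrightarrow> strict_prefix (env x) p"
  shows "\<forall>e \<in> set (diag_edges env p t). \<not> cross v e"
proof
  fix e assume e: "e \<in> set (diag_edges env p t)"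
  have nv: "\<not> prefix v z" if "z \<in> diag_vertices p t" for z
  proof
    assume "prefix v z"
    moreover have "prefix p z" using dv_prefix[OF that] .
    ultimately have "prefix v p \<or> prefix p v" using prefix_same_cases by blast
    then show False using assms by blast
  qed
  have "\<not> prefix v (fst e)" using endp[OF e] nv by blast
  moreover have "\<not> prefix v (snd e)"
  proof
    assume pv: "prefix v (snd e)"
    from endp[OF e] consider "snd e \<in> diag_vertices p t" | x where "occ x t > 0" "snd e = env x" by blast
    then show False
    proof cases
      case 1 then show False using nv pv by blast
    next
      case 2
      then have "strict_prefix (snd e) p" using assms(3) by simp
      then have "prefix v p" using pv by (meson prefix_order.trans strict_prefix_def)
      then show False using assms by blast
    qed
  qed
  ultimately show "\<not> cross v e" by (simp add: cross_def)
qed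

lemma C1:
  assumes "prefix v p" "\<forall>x. occ x t > 0 \<longrightarrow> prefix v (env x)"
  shows "\<forall>e \<in> set (diag_edges env p t). \<not> cross v e"
proof
  fix e assume e: "e \<in> set (diag_edges env p t)"
  have pz: "prefix v z" if "z \<in> diag_vertices p t" for z
    using dv_prefix[OF that] assms(1) prefix_order.trans by blast
  have "prefix v (fst e)" using endp[OF e] pz by blast
  moreover have "prefix v (snd e)" using endp[OF e] pz assms(2) by auto
  ultimately show "\<not> cross v e" by (simp add: cross_def)
qed

lemma ce_nocross:
  assumes "\<not> (i = j \<and> q' = [])" "\<forall>z. c = Var z \<longrightarrow> length (env z) \<le> length p"
  shows "\<not> cross (p @ j # q') (child_edge env p i c)"
proof -
  let ?v = "p @ j # q'"
  have a: "\<not> prefix ?v p" using prefix_length_le by fastforce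
  have b: "\<not> prefix ?v (snd (child_edge env p i c))"
  proof (cases "isvar c")
    case True
    then obtain z where z: "c = Var z" by (cases c) auto
    then have "length (env z) \<le> length p" using assms(2) by blast
    then show ?thesis using z prefix_length_le by fastforce
  next
    case False
    then have "snd (child_edge env p i c) = p @ [i]" by (simp add: ce_nonvar)
    moreover have "\<not> prefix ?v (p @ [i])" using assms(1) by auto
    ultimately show ?thesis by simp
  qed
  have "fst (child_edge env p i c) = p" by (cases c) auto
  then show ?thesis using a b by (simp add: cross_def)
qed

lemma ce_cross: "\<not> isvar c \<Longrightarrow> cross (p @ [i]) (child_edge env p i c)"
  by (simp add: ce_nonvar cross_def)

lemma filter_none: "\<forall>e\<in>set xs. \<not> P e \<Longrightarrow> filter P xs = []"
  by (simp add: filter_empty_conv)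

lemma C2:
  "sub t q = Some s \<Longrightarrow> q \<noteq> [] \<Longrightarrow> \<forall>z. occ z s = 0 \<Longrightarrow>
   \<forall>x. occ x t > 0 \<longrightarrow> strict_prefix (env x) p \<Longrightarrow>
   length (filter (cross (p @ q)) (diag_edges env p t)) = 1"
proof (induction t arbitrary: env p q)
  case (Var x)
  then show ?case by (cases q) auto
next
  case (Lam y t)
  let ?env = "env(y := p)"
  obtain i q' where q: "q = i # q'" using Lam.prems(2) by (cases q) auto
  have i: "i = 0" and sq: "sub t q' = Some s" using Lam.prems(1) q by (auto split: if_splits)
  have envp: "\<forall>x. occ x t > 0 \<longrightarrow> strict_prefix (?env x) (p @ [0])"
  proof (intro allI impI)
    fix x assume "occ x t > 0"
    show "strict_prefix (?env x) (p @ [0])"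
    proof (cases "x = y")
      case True then show ?thesis by (simp add: sp_snoc)
    next
      case False
      then have "occ x (Lam y t) > 0" using \<open>occ x t > 0\<close> by simp
      then show ?thesis using Lam.prems(4) False by (simp add: sp_trans_snoc)
    qed
  qed
  have lenv: "\<forall>z. t = Var z \<longrightarrow> length (?env z) \<le> length p"
  proof (intro allI impI)
    fix z assume "t = Var z"
    show "length (?env z) \<le> length p"
    proof (cases "z = y")
      case True then show ?thesis by simp
    next
      case False
      then have "occ z (Lam y t) > 0" using \<open>t = Var z\<close> by simp
      then have "strict_prefix (env z) p" using Lam.prems(4) by blast
      then show ?thesis using False prefix_length_less[of "env z" p] by simp
    qed
  qed
  show ?case
  proof (cases "q' = []")
    case True
    then have st: "s = t" using sq by simp
    then have nv: "\<not> isvar t" using closed_nonvar Lam.prems(3) by blast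
    have c: "cross (p @ [0]) (child_edge ?env p 0 t)" using ce_cross[OF nv] .
    have "\<forall>e \<in> set (diag_edges ?env (p @ [0]) t). \<not> cross (p @ [0]) e"
      using C1[of "p @ [0]" "p @ [0]" t ?env] Lam.prems(3) st by simp
    then have "filter (cross (p @ [0])) (diag_edges ?env (p @ [0]) t) = []" by (rule filter_none)
    then show ?thesis using c q i True by simp
  next
    case False
    have nc: "\<not> cross (p @ 0 # q') (child_edge ?env p 0 t)"
      using ce_nocross[of 0 0 q' t ?env p] False lenv by simp
    have "length (filter (cross ((p @ [0]) @ q')) (diag_edges ?env (p @ [0]) t)) = 1"
      using Lam.IH[OF sq False Lam.prems(3) envp] .
    then show ?thesis using nc q i by simp
  qed
next
  case (App t u)
  obtain i q' where q: "q = i # q'" using App.prems(2) by (cases q) auto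
  have envt: "\<forall>x. occ x t > 0 \<longrightarrow> strict_prefix (env x) (p @ [0])"
    using App.prems(4) by (simp add: sp_trans_snoc)
  have envu: "\<forall>x. occ x u > 0 \<longrightarrow> strict_prefix (env x) (p @ [1])"
    using App.prems(4) by (simp add: sp_trans_snoc)
  have lt: "\<forall>z. t = Var z \<longrightarrow> length (env z) \<le> length p"
  proof (intro allI impI)
    fix z assume "t = Var z"
    then have "occ z (App t u) > 0" by simp
    then have "strict_prefix (env z) p" using App.prems(4) by blast
    then show "length (env z) \<le> length p" using prefix_length_less[of "env z" p] by simp
  qed
  have lu: "\<forall>z. u = Var z \<longrightarrow> length (env z) \<le> length p"
  proof (intro allI impI)
    fix z assume "u = Var z"
    then have "occ z (App t u) > 0" by simp
    then have "strict_prefix (env z) p" using App.prems(4) by blast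
    then show "length (env z) \<le> length p" using prefix_length_less[of "env z" p] by simp
  qed
  from App.prems(1) q consider "i = 0" "sub t q' = Some s" | "i = 1" "sub u q' = Some s"
    by (auto split: if_splits)
  then show ?case
  proof cases
    case 1
    have nc1: "\<not> cross (p @ 0 # q') (child_edge env p 1 u)"
      using ce_nocross[of 1 0 q' u env p] lu by simp
    have d2: "\<forall>e \<in> set (diag_edges env (p @ [1]) u). \<not> cross (p @ 0 # q') e"
      by (rule C0[OF _ _ envu]) auto
    then have f2: "filter (cross (p @ 0 # q')) (diag_edges env (p @ [1]) u) = []" by (rule filter_none)
    show ?thesis
    proof (cases "q' = []")
      case True
      then have st: "s = t" using 1 by simp
      then have nv: "\<not> isvar t" using closed_nonvar App.prems(3) by blast
      have c: "cross (p @ [0]) (child_edge env p 0 t)" using ce_cross[OF nv] .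
      have "\<forall>e \<in> set (diag_edges env (p @ [0]) t). \<not> cross (p @ [0]) e"
        using C1[of "p @ [0]" "p @ [0]" t env] App.prems(3) st by simp
      then have "filter (cross (p @ [0])) (diag_edges env (p @ [0]) t) = []" by (rule filter_none)
      then show ?thesis using c q 1 True nc1 f2 by simp
    next
      case False
      have nc: "\<not> cross (p @ 0 # q') (child_edge env p 0 t)"
        using ce_nocross[of 0 0 q' t env p] False lt by simp
      have "length (filter (cross ((p @ [0]) @ q')) (diag_edges env (p @ [0]) t)) = 1"
        using App.IH(1)[OF 1(2) False App.prems(3) envt] .
      then show ?thesis using nc nc1 f2 q 1 by simp
    qed
  next
    case 2
    have nc0: "\<not> cross (p @ 1 # q') (child_edge env p 0 t)"
      using ce_nocross[of 0 1 q' t env p] lt by simp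
    have d1: "\<forall>e \<in> set (diag_edges env (p @ [0]) t). \<not> cross (p @ 1 # q') e"
      by (rule C0[OF _ _ envt]) auto
    then have f1: "filter (cross (p @ 1 # q')) (diag_edges env (p @ [0]) t) = []" by (rule filter_none)
    show ?thesis
    proof (cases "q' = []")
      case True
      then have st: "s = u" using 2 by simp
      then have nv: "\<not> isvar u" using closed_nonvar App.prems(3) by blast
      have c: "cross (p @ [1]) (child_edge env p 1 u)" using ce_cross[OF nv] .
      have "\<forall>e \<in> set (diag_edges env (p @ [1]) u). \<not> cross (p @ [1]) e"
        using C1[of "p @ [1]" "p @ [1]" u env] App.prems(3) st by simp
      then have "filter (cross (p @ [1])) (diag_edges env (p @ [1]) u) = []" by (rule filter_none)
      then show ?thesis using c q 2 True nc0 f1 by simp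
    next
      case False
      have nc: "\<not> cross (p @ 1 # q') (child_edge env p 1 u)"
        using ce_nocross[of 1 1 q' u env p] False lu by simp
      have "length (filter (cross ((p @ [1]) @ q')) (diag_edges env (p @ [1]) u)) = 1"
        using App.IH(2)[OF 2(2) False App.prems(3) envu] .
      then show ?thesis using nc nc0 f1 q 2 by simp
    qed
  qed
qed

lemma filter_one:
  "length (filter P xs) = 1 \<Longrightarrow> \<exists>i < length xs. \<forall>e \<in> set (take i xs @ drop (Suc i) xs). \<not> P e"
proof (induction xs)
  case Nil
  then show ?case by simp
next
  case (Cons a xs)
  show ?case
  proof (cases "P a")
    case True
    then have "filter P xs = []" using Cons.prems by simp
    then have "\<forall>e \<in> set xs. \<not> P e" by (simp add: filter_empty_conv)
    then show ?thesis by (intro exI[of _ 0]) auto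
  next
    case False
    then obtain i where "i < length xs" "\<forall>e \<in> set (take i xs @ drop (Suc i) xs). \<not> P e"
      using Cons by auto
    then show ?thesis using False by (intro exI[of _ "Suc i"]) auto
  qed
qed

lemma two_conn_fv_ok:
  assumes cl: "\<forall>x. occ x t = 0" and tc: "two_connected_term t"
  shows "fv_ok t"
proof (rule ccontr)
  assume "\<not> fv_ok t"
  then obtain q s where qs: "q \<noteq> []" "sub t q = Some s" "\<forall>z. occ z s = 0" using nfv by blast
  let ?V = "diag_vertices [] t"
  let ?L = "diag_edges (\<lambda>_. []) [] t"
  have "length (filter (cross ([] @ q)) ?L) = 1"
    using C2[OF qs(2) qs(1) qs(3), of "\<lambda>_. []" "[]"] cl by simp
  then have "length (filter (cross q) ?L) = 1" by simp
  then have "\<exists>i < length ?L. \<forall>e \<in> set (take i ?L @ drop (Suc i) ?L). \<not> cross q e"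
    by (rule filter_one)
  then obtain i where i: "i < length ?L" "\<forall>e \<in> set (take i ?L @ drop (Suc i) ?L). \<not> cross q e"
    by blast
  have "mg_connected ?V (take i ?L @ drop (Suc i) ?L)"
    using tc i(1) by (simp add: two_connected_term_def two_edge_connected_def diagram_vertices_def diagram_edges_def)
  moreover have "[] \<in> ?V" using dv_nonvar closed_nonvar[OF cl] by blast
  moreover have "q \<in> ?V" using sub_vertex[OF qs(2) closed_nonvar[OF qs(3)], of "[]"] by simp
  ultimately have r: "([], q) \<in> {(x, y). (x, y) \<in> set (take i ?L @ drop (Suc i) ?L) \<or> (y, x) \<in> set (take i ?L @ drop (Suc i) ?L)}\<^sup>*"
    unfolding mg_connected_def by blast
  have np: "\<not> prefix q x" if "([], x) \<in> {(x, y). (x, y) \<in> set (take i ?L @ drop (Suc i) ?L) \<or> (y, x) \<in> set (take i ?L @ drop (Suc i) ?L)}\<^sup>*" for x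
    using that
  proof (induction rule: rtrancl_induct)
    case base
    then show ?case using qs(1) by simp
  next
    case (step y z)
    then have "\<not> cross q (y, z) \<or> \<not> cross q (z, y)" using i(2) by blast
    then have "prefix q y = prefix q z" by (auto simp: cross_def)
    then show ?case using step.IH by simp
  qed
  from np[OF r] show False by simp
qed




fun qok :: "utree \<Rightarrow> bool" where
  "qok LNode = True"
| "qok (UNode s) = (lab s \<ge> 1 \<and> qok s)"
| "qok (BNode a b) = (lab a \<ge> 1 \<and> lab b \<ge> 1 \<and> (\<forall>s. a \<noteq> UNode s) \<and> qok a \<and> qok b)"

fun uchain :: "utree list \<Rightarrow> utree" where
  "uchain [] = LNode"
| "uchain (b # bs) = BNode (uchain bs) b"

fun phi_node :: "int ptree \<Rightarrow> utree" where
  "phi_node (Node l ks) = (UNode ^^ nat (1 + sum_list (map root_label ks) - l)) (uchain (map phi_node ks))"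

definition psi_node :: "utree \<Rightarrow> int ptree" where
  "psi_node s = Node (lab s) (psi_kids s)"

definition phi :: "int ptree \<Rightarrow> utree" where
  "phi T = (UNode ^^ nat (root_label T)) (phi_node T)"

lemma lab_simps[simp]:
  "lab LNode = 1" "lab (UNode s) = lab s - 1" "lab (BNode a b) = lab a + lab b"
  by (auto simp: lab_def)

lemma leaf_pos: "leaf_count s \<ge> 1"
  by (induction s) auto

lemma psi_node_props:
  "qok s \<Longrightarrow> lab s \<ge> 1 \<Longrightarrow>
    vt_nonroot (psi_node s) \<and> 0 \<notin> labels (psi_node s) \<and> phi_node (psi_node s) = s
    \<and> int (tree_edges (psi_node s)) + 1 = int (leaf_count s)"
proof (induction s)
  case LNode
  then show ?case by (simp add: psi_node_def)
next
  case (UNode s)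
  then have qs: "qok s" "lab s \<ge> 2" by auto
  with UNode.IH have IH: "vt_nonroot (psi_node s) \<and> 0 \<notin> labels (psi_node s) \<and> phi_node (psi_node s) = s
    \<and> int (tree_edges (psi_node s)) + 1 = int (leaf_count s)" by auto
  let ?ks = "psi_kids s"
  have nr: "vt_nonroot (Node (lab s) ?ks)" using IH unfolding psi_node_def by blast
  have ksne: "?ks \<noteq> []"
  proof
    assume "?ks = []"
    then have "lab s = 0 \<or> lab s = 1" using nr by simp
    then show False using qs(2) by linarith
  qed
  have le: "lab s \<le> 1 + sum_list (map root_label ?ks)" using nr by simp
  have eq: "nat (1 + sum_list (map root_label ?ks) - (lab s - 1)) = Suc (nat (1 + sum_list (map root_label ?ks) - lab s))"
    using le by simp
  have "vt_nonroot (psi_node (UNode s))" using nr ksne qs le by (simp add: psi_node_def)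
  moreover have "0 \<notin> labels (psi_node (UNode s))" using IH qs by (auto simp: psi_node_def)
  moreover have "phi_node (psi_node (UNode s)) = UNode s" using IH eq
    by (simp add: psi_node_def)
  moreover have "int (tree_edges (psi_node (UNode s))) + 1 = int (leaf_count (UNode s))"
    using IH by (simp add: psi_node_def)
  ultimately show ?case by blast
next
  case (BNode a b)
  then have q: "qok a" "qok b" "lab a \<ge> 1" "lab b \<ge> 1" "\<forall>s. a \<noteq> UNode s" by auto
  from BNode.IH q have IHa: "vt_nonroot (psi_node a) \<and> 0 \<notin> labels (psi_node a) \<and> phi_node (psi_node a) = a
    \<and> int (tree_edges (psi_node a)) + 1 = int (leaf_count a)" by auto
  from BNode.IH q have IHb: "vt_nonroot (psi_node b) \<and> 0 \<notin> labels (psi_node b) \<and> phi_node (psi_node b) = b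
    \<and> int (tree_edges (psi_node b)) + 1 = int (leaf_count b)" by auto
  let ?ka = "psi_kids a"
  have pk: "psi_kids (BNode a b) = psi_node b # ?ka"
    using q(5) by (cases a) (auto simp: psi_node_def)
  have nra: "vt_nonroot (Node (lab a) ?ka)" using IHa unfolding psi_node_def by blast
  have le: "lab a \<le> 1 + sum_list (map root_label ?ka)" using nra by simp
  have a_eq: "(UNode ^^ nat (1 + sum_list (map root_label ?ka) - lab a)) (uchain (map phi_node ?ka)) = a"
    using IHa by (simp add: psi_node_def)
  have z: "nat (1 + sum_list (map root_label ?ka) - lab a) = 0"
  proof (rule ccontr)
    assume "nat (1 + sum_list (map root_label ?ka) - lab a) \<noteq> 0"
    then obtain j where "nat (1 + sum_list (map root_label ?ka) - lab a) = Suc j" using not0_implies_Suc by blast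
    then have "a = UNode ((UNode ^^ j) (uchain (map phi_node ?ka)))" using a_eq
      by (metis funpow.simps(2) o_apply)
    then show False using q(5) by blast
  qed
  have ch: "uchain (map phi_node ?ka) = a" using a_eq z by simp
  have rlb: "root_label (psi_node b) = lab b" by (simp add: psi_node_def)
  have sumeq: "sum_list (map root_label ?ka) = lab a - 1" using z le by simp
  have pn: "psi_node (BNode a b) = Node (lab a + lab b) (psi_node b # ?ka)"
    using pk unfolding psi_node_def by simp
  have "vt_nonroot (psi_node (BNode a b))"
    using IHa IHb q nra le rlb unfolding pn by auto
  moreover have "0 \<notin> labels (psi_node (BNode a b))"
    using IHa IHb q nra unfolding pn by (auto simp: psi_node_def)
  moreover have "phi_node (psi_node (BNode a b)) = BNode a b"
    using IHb ch sumeq rlb unfolding pn by simp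
  moreover have "int (tree_edges (psi_node (BNode a b))) + 1 = int (leaf_count (BNode a b))"
    using IHa IHb unfolding pn by (simp add: psi_node_def)
  ultimately show ?case by blast
qed


lemma unaries_simps[simp]:
  "lab ((UNode ^^ j) c) = lab c - int j"
  "psi_kids ((UNode ^^ j) c) = psi_kids c"
  "leaf_count ((UNode ^^ j) c) = leaf_count c"
  "first_nonunary ((UNode ^^ j) c) = first_nonunary c"
  by (induction j) auto

lemma qok_unaries: "qok c \<Longrightarrow> lab c - int j \<ge> 0 \<Longrightarrow> qok ((UNode ^^ j) c)"
  by (induction j) auto

lemma chain_props:
  "(\<forall>b\<in>set bs. qok b \<and> lab b \<ge> 1) \<Longrightarrow>
   qok (uchain bs) \<and> lab (uchain bs) = 1 + sum_list (map lab bs) \<and> psi_kids (uchain bs) = map psi_node bs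
   \<and> leaf_count (uchain bs) = 1 + sum_list (map leaf_count bs) \<and> first_nonunary (uchain bs) = uchain bs"
proof (induction bs)
  case Nil
  then show ?case by simp
next
  case (Cons b bs)
  then have IH: "qok (uchain bs) \<and> lab (uchain bs) = 1 + sum_list (map lab bs) \<and> psi_kids (uchain bs) = map psi_node bs
   \<and> leaf_count (uchain bs) = 1 + sum_list (map leaf_count bs)" by auto
  have nu: "\<forall>s. uchain bs \<noteq> UNode s" by (cases bs) auto
  have lp: "sum_list (map lab bs) \<ge> 0"
    using Cons.prems by (intro sum_list_nonneg) auto
  have pk: "psi_kids (BNode (uchain bs) b) = psi_node b # psi_kids (uchain bs)"
    by (cases bs) (auto simp: psi_node_def)
  show ?case using IH nu lp Cons.prems pk by auto
qed

lemma sum_list_suc: "sum_list (map (\<lambda>k. f k + 1) ks) = sum_list (map f ks) + length (ks::'a list)"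
  "sum_list (map (\<lambda>k. Suc (f k)) ks) = sum_list (map f ks) + length (ks::'a list)"
  by (induction ks) auto

lemma phi_node_props:
  "vt_nonroot T \<Longrightarrow> 0 \<notin> labels T \<Longrightarrow>
   qok (phi_node T) \<and> lab (phi_node T) = root_label T \<and> psi_node (phi_node T) = T
   \<and> leaf_count (phi_node T) = tree_edges T + 1"
proof (induction T)
  case (Node l ks)
  let ?bs = "map phi_node ks"
  have IH: "\<forall>k\<in>set ks. qok (phi_node k) \<and> lab (phi_node k) = root_label k \<and> psi_node (phi_node k) = k
   \<and> leaf_count (phi_node k) = tree_edges k + 1" using Node by auto
  have pos: "\<forall>k\<in>set ks. root_label k \<ge> 1"
  proof
    fix k assume k: "k \<in> set ks"
    obtain l' ks' where kk: "k = Node l' ks'" by (cases k)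
    have "vt_nonroot k" "0 \<notin> labels k" using Node.prems k by auto
    then show "root_label k \<ge> 1" using kk by (cases "l' = 0") auto
  qed
  have cp: "qok (uchain ?bs) \<and> lab (uchain ?bs) = 1 + sum_list (map lab ?bs) \<and> psi_kids (uchain ?bs) = map psi_node ?bs
   \<and> leaf_count (uchain ?bs) = 1 + sum_list (map leaf_count ?bs)"
    using chain_props[of ?bs] IH pos by auto
  have m1: "map lab ?bs = map root_label ks" using IH by auto
  have m2: "map psi_node ?bs = ks" using IH by (induction ks) auto
  have m3: "map leaf_count ?bs = map (\<lambda>k. tree_edges k + 1) ks" using IH by auto
  have L: "lab (uchain ?bs) = 1 + sum_list (map root_label ks)" using cp m1 by metis
  have K: "psi_kids (uchain ?bs) = ks" using cp m2 by metis
  have LC: "leaf_count (uchain ?bs) = 1 + sum_list (map (\<lambda>k. tree_edges k + 1) ks)" using cp m3 by metis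
  have Q: "qok (uchain ?bs)" using cp by blast
  have le: "l \<le> 1 + sum_list (map root_label ks)" "0 \<le> l" "l \<noteq> 0" using Node.prems by auto
  define j where "j = nat (1 + sum_list (map root_label ks) - l)"
  have j: "int j = 1 + sum_list (map root_label ks) - l" using le j_def by simp
  have pn: "phi_node (Node l ks) = (UNode ^^ j) (uchain ?bs)" by (simp add: j_def)
  have "qok (phi_node (Node l ks))" unfolding pn using Q L j le by (intro qok_unaries) auto
  moreover have "lab (phi_node (Node l ks)) = l" unfolding pn using L j by simp
  moreover have "psi_node (phi_node (Node l ks)) = Node l ks" using L K j unfolding pn
    by (simp add: psi_node_def)
  moreover have "leaf_count (phi_node (Node l ks)) = tree_edges (Node l ks) + 1"
    unfolding pn using LC by (simp add: sum_list_suc)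
  ultimately show ?case by simp
qed

lemma fnu_props0:
  "qok S \<Longrightarrow> \<exists>k. S = (UNode ^^ k) (first_nonunary S) \<and> qok (first_nonunary S)
     \<and> (k > 0 \<longrightarrow> lab (first_nonunary S) \<ge> 1) \<and> (\<forall>s. first_nonunary S \<noteq> UNode s)"
proof (induction S)
  case LNode
  then show ?case by (intro exI[of _ 0]) auto
next
  case (UNode S)
  then obtain k where k: "S = (UNode ^^ k) (first_nonunary S)" "qok (first_nonunary S)"
     "(k > 0 \<longrightarrow> lab (first_nonunary S) \<ge> 1)" "(\<forall>s. first_nonunary S \<noteq> UNode s)" by auto
  have "lab (first_nonunary S) \<ge> 1"
  proof (cases "k > 0")
    case True then show ?thesis using k by auto
  next
    case False then have "S = first_nonunary S" using k(1) by simp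
    then show ?thesis using UNode.prems by (metis qok.simps(2))
  qed
  then show ?case using k by (intro exI[of _ "Suc k"]) auto
next
  case (BNode a b)
  then show ?case by (intro exI[of _ 0]) auto
qed

lemma fnu_props:
  "qok S \<Longrightarrow> \<exists>k c. S = (UNode ^^ k) c \<and> qok c
     \<and> (k > 0 \<longrightarrow> lab c \<ge> 1) \<and> (\<forall>s. c \<noteq> UNode s) \<and> first_nonunary S = c"
  using fnu_props0 by blast

definition Qset :: "nat \<Rightarrow> utree set" where
  "Qset n = {S. qok S \<and> lab S = 0 \<and> leaf_count S = n}"

lemma psi_root:
  assumes "qok S" "lab S = 0"
  shows "psi S \<in> Vplus (leaf_count S - 1) \<and> phi (psi S) = S"
proof -
  obtain k c where k: "S = (UNode ^^ k) c" "qok c"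
     "(k > 0 \<longrightarrow> lab c \<ge> 1)" "(\<forall>s. c \<noteq> UNode s)" "first_nonunary S = c"
    using fnu_props[OF assms(1)] by blast
  have lc: "lab S = lab c - int k" using k(1) by simp
  have "k > 0"
  proof (rule ccontr)
    assume "\<not> k > 0"
    then have "S = c" using k(1) by simp
    then show False using assms k(4)
    proof (cases S)
      case (BNode a b)
      then show ?thesis using assms by auto
    qed auto
  qed
  then have c1: "lab c \<ge> 1" using k by auto
  have lck: "lab c = int k" using lc assms(2) by simp
  have P: "vt_nonroot (psi_node c) \<and> 0 \<notin> labels (psi_node c) \<and> phi_node (psi_node c) = c
    \<and> int (tree_edges (psi_node c)) + 1 = int (leaf_count c)"
    using psi_node_props[OF k(2) c1] .
  have ps: "psi S = psi_node c"
  proof -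
    have "psi_kids S = psi_kids c" using k(1) by simp
    then show ?thesis using k(5) by (simp add: psi_def psi_node_def)
  qed
  let ?ks = "psi_kids c"
  have nr: "vt_nonroot (Node (lab c) ?ks)" using P unfolding psi_node_def by blast
  have le: "lab c \<le> 1 + sum_list (map root_label ?ks)" using nr by simp
  have c_eq: "(UNode ^^ nat (1 + sum_list (map root_label ?ks) - lab c)) (uchain (map phi_node ?ks)) = c"
    using P by (simp add: psi_node_def)
  have z: "nat (1 + sum_list (map root_label ?ks) - lab c) = 0"
  proof (rule ccontr)
    assume "nat (1 + sum_list (map root_label ?ks) - lab c) \<noteq> 0"
    then obtain j where "nat (1 + sum_list (map root_label ?ks) - lab c) = Suc j" using not0_implies_Suc by blast
    then have "c = UNode ((UNode ^^ j) (uchain (map phi_node ?ks)))" using c_eq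
      by (metis funpow.simps(2) o_apply)
    then show False using k(4) by blast
  qed
  have lsum: "lab c = 1 + sum_list (map root_label ?ks)" using z le by simp
  have iv: "is_vtree (psi S)" using nr lsum unfolding ps psi_node_def by auto
  have lb: "0 \<notin> labels (psi S)" using P ps by simp
  have te: "tree_edges (psi S) = leaf_count S - 1"
  proof -
    have "leaf_count S = leaf_count c" using k(1) by simp
    moreover have "int (tree_edges (psi_node c)) + 1 = int (leaf_count c)" using P by blast
    ultimately show ?thesis using ps by simp
  qed
  have "phi (psi S) = S"
  proof -
    have "phi (psi S) = (UNode ^^ nat (lab c)) (phi_node (psi_node c))"
      unfolding ps phi_def by (simp add: psi_node_def)
    also have "\<dots> = (UNode ^^ k) c" using P lck by simp
    finally show ?thesis using k(1) by simp
  qed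
  then show ?thesis using iv lb te by (simp add: Vplus_def)
qed

lemma phi_root:
  assumes "T \<in> Vplus m"
  shows "phi T \<in> Qset (Suc m) \<and> psi (phi T) = T"
proof -
  obtain l ks where T: "T = Node l ks" by (cases T)
  have iv: "is_vtree (Node l ks)" "tree_edges (Node l ks) = m" "0 \<notin> labels (Node l ks)"
    using assms T by (auto simp: Vplus_def)
  let ?bs = "map phi_node ks"
  have IH: "\<forall>k\<in>set ks. qok (phi_node k) \<and> lab (phi_node k) = root_label k \<and> psi_node (phi_node k) = k
   \<and> leaf_count (phi_node k) = tree_edges k + 1"
    using iv phi_node_props by auto
  have pos: "\<forall>k\<in>set ks. root_label k \<ge> 1"
  proof
    fix k assume k: "k \<in> set ks"
    obtain l' ks' where kk: "k = Node l' ks'" by (cases k)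
    have "vt_nonroot k" "0 \<notin> labels k" using iv k by auto
    then show "root_label k \<ge> 1" using kk by (cases "l' = 0") auto
  qed
  have cp: "qok (uchain ?bs) \<and> lab (uchain ?bs) = 1 + sum_list (map lab ?bs) \<and> psi_kids (uchain ?bs) = map psi_node ?bs
   \<and> leaf_count (uchain ?bs) = 1 + sum_list (map leaf_count ?bs) \<and> first_nonunary (uchain ?bs) = uchain ?bs"
    using chain_props[of ?bs] IH pos by auto
  have m1: "map lab ?bs = map root_label ks" using IH by auto
  have m2: "map psi_node ?bs = ks" using IH by (induction ks) auto
  have m3: "map leaf_count ?bs = map (\<lambda>k. tree_edges k + 1) ks" using IH by auto
  have L: "lab (uchain ?bs) = 1 + sum_list (map root_label ks)" using cp m1 by metis
  have K: "psi_kids (uchain ?bs) = ks" using cp m2 by metis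
  have LC: "leaf_count (uchain ?bs) = 1 + sum_list (map (\<lambda>k. tree_edges k + 1) ks)" using cp m3 by metis
  have Q: "qok (uchain ?bs)" using cp by blast
  have l: "l = 1 + sum_list (map root_label ks)" using iv by simp
  have pn: "phi T = (UNode ^^ nat l) (uchain ?bs)" unfolding T phi_def using l by simp
  have F: "first_nonunary (uchain ?bs) = uchain ?bs" using cp by blast
  have sn: "sum_list (map root_label ks) \<ge> 0" using pos by (intro sum_list_nonneg) auto
  have "qok (phi T)" unfolding pn by (rule qok_unaries[OF Q]) (use L l sn in simp)
  moreover have "lab (phi T) = 0" unfolding pn using L l sn by simp
  moreover have "leaf_count (phi T) = Suc m" unfolding pn using LC iv(2) by (simp add: sum_list_suc)
  moreover have "psi (phi T) = T"
  proof -
    have "psi (phi T) = Node (lab (uchain ?bs)) (psi_kids (uchain ?bs))"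
      unfolding pn psi_def using F by simp
    then show ?thesis using L K l T by simp
  qed
  ultimately show ?thesis by (simp add: Qset_def)
qed

lemma psi_bij: "n \<ge> 1 \<Longrightarrow> bij_betw psi (Qset n) (Vplus (n - 1))"
proof (rule bij_betw_byWitness[where f' = phi])
  assume n: "n \<ge> 1"
  show "\<forall>a\<in>Qset n. phi (psi a) = a" using psi_root by (auto simp: Qset_def)
  show "\<forall>a'\<in>Vplus (n - 1). psi (phi a') = a'" using phi_root by blast
  show "psi ` Qset n \<subseteq> Vplus (n - 1)" using psi_root by (auto simp: Qset_def)
  have "Suc (n - 1) = n" using n by simp
  then show "phi ` Vplus (n - 1) \<subseteq> Qset n" using phi_root[of _ "n - 1"] by auto
qed



section \<open>Skeleton characterization\<close>

lemma lab_skel: "planar_ctx G t \<Longrightarrow> lab (skel t) = int (length G)"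
  using planar_lab by (simp add: lab_def)

lemma skel_qok: "planar_ctx G t \<Longrightarrow> normal_term t \<Longrightarrow> fv_ok t \<Longrightarrow> qok (skel t)"
proof (induction rule: planar_ctx.induct)
  case (pvar x)
  then show ?case by simp
next
  case (plam x G t)
  have "lab (skel t) = int (length (G @ [x]))" using lab_skel[OF plam(2)] .
  then show ?case using plam by simp
next
  case (papp G t D u)
  have ft: "hasfree t" "hasfree u" "fv_ok t" "fv_ok u" using papp.prems by auto
  have nt: "normal_term t" "normal_term u" "\<forall>x s. t \<noteq> Lam x s" using papp.prems by auto
  obtain z where z: "occ z t > 0" using ft(1) by (auto simp: hasfree.simps)
  then have "count_list G z > 0" using planar_occ[OF papp(1)] by simp
  then have "G \<noteq> []" by auto
  then have la: "lab (skel t) \<ge> 1" using lab_skel[OF papp(1)] by (cases G) auto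
  obtain z' where z': "occ z' u > 0" using ft(2) by (auto simp: hasfree.simps)
  then have "count_list D z' > 0" using planar_occ[OF papp(2)] by simp
  then have "D \<noteq> []" by auto
  then have lb: "lab (skel u) \<ge> 1" using lab_skel[OF papp(2)] by (cases D) auto
  have nu: "\<forall>s. skel t \<noteq> UNode s" using nt(3) by (cases t) auto
  show ?case using la lb nu papp.IH ft nt by simp
qed

fun build :: "nat \<Rightarrow> nat list \<Rightarrow> utree \<Rightarrow> lterm" where
  "build d G LNode = Var (hd G)"
| "build d G (UNode s) = Lam d (build (Suc d) (G @ [d]) s)"
| "build d G (BNode a b) = App (build d (take (nat (lab a)) G) a) (build d (drop (nat (lab a)) G) b)"

lemma hasfree_planar: "planar_ctx G t \<Longrightarrow> G \<noteq> [] \<Longrightarrow> hasfree t"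
proof -
  assume p: "planar_ctx G t" and g: "G \<noteq> []"
  have "count_list G (hd G) > 0" using g by (cases G) auto
  then have "occ (hd G) t > 0" using planar_occ[OF p] by simp
  then show ?thesis by (auto simp: hasfree.simps)
qed

lemma build_ok:
  "qok s \<Longrightarrow> int (length G) = lab s \<Longrightarrow> (\<forall>x\<in>set G. x < d) \<Longrightarrow>
   planar_ctx G (build d G s) \<and> skel (build d G s) = s \<and> normal_term (build d G s) \<and> fv_ok (build d G s)"
proof (induction s arbitrary: d G)
  case LNode
  then have "length G = 1" by simp
  then obtain x where "G = [x]" by (metis One_nat_def length_0_conv length_Suc_conv)
  then show ?case by (simp add: planar_ctx.pvar)
next
  case (UNode s)
  have q: "qok s" "lab s \<ge> 1" using UNode.prems by auto
  have len: "int (length (G @ [d])) = lab s" using UNode.prems by simp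
  have lt: "\<forall>x\<in>set (G @ [d]). x < Suc d" using UNode.prems by auto
  from UNode.IH[OF q(1) len lt] have IH:
    "planar_ctx (G @ [d]) (build (Suc d) (G @ [d]) s)" "skel (build (Suc d) (G @ [d]) s) = s"
    "normal_term (build (Suc d) (G @ [d]) s)" "fv_ok (build (Suc d) (G @ [d]) s)" by auto
  have nd: "d \<notin> set G" using UNode.prems by auto
  have pl: "planar_ctx G (build d G (UNode s))" using planar_ctx.plam[OF nd IH(1)] by simp
  have hf: "hasfree (build (Suc d) (G @ [d]) s)" using hasfree_planar[OF IH(1)] by simp
  show ?case using pl IH hf by simp
next
  case (BNode a b)
  have q: "qok a" "qok b" "lab a \<ge> 1" "lab b \<ge> 1" "\<forall>s. a \<noteq> UNode s" using BNode.prems by auto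
  let ?k = "nat (lab a)"
  let ?Ga = "take ?k G"
  let ?Gb = "drop ?k G"
  have lG: "int (length G) = lab a + lab b" using BNode.prems by simp
  have la: "int (length ?Ga) = lab a" using lG q by simp
  have lb: "int (length ?Gb) = lab b" using lG q by simp
  have lta: "\<forall>x\<in>set ?Ga. x < d" using BNode.prems(3) by (meson in_set_takeD)
  have ltb: "\<forall>x\<in>set ?Gb. x < d" using BNode.prems(3) by (meson in_set_dropD)
  from BNode.IH(1)[OF q(1) la lta] have IHa:
    "planar_ctx ?Ga (build d ?Ga a)" "skel (build d ?Ga a) = a"
    "normal_term (build d ?Ga a)" "fv_ok (build d ?Ga a)" by auto
  from BNode.IH(2)[OF q(2) lb ltb] have IHb:
    "planar_ctx ?Gb (build d ?Gb b)" "skel (build d ?Gb b) = b"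
    "normal_term (build d ?Gb b)" "fv_ok (build d ?Gb b)" by auto
  have pl: "planar_ctx (?Ga @ ?Gb) (App (build d ?Ga a) (build d ?Gb b))"
    by (rule planar_ctx.papp[OF IHa(1) IHb(1)])
  then have pl': "planar_ctx G (build d G (BNode a b))" by simp
  have nea: "?Ga \<noteq> []" using la q(3) by auto
  have neb: "?Gb \<noteq> []" using lb q(4) by auto
  have hfa: "hasfree (build d ?Ga a)" using hasfree_planar[OF IHa(1) nea] .
  have hfb: "hasfree (build d ?Gb b)" using hasfree_planar[OF IHb(1) neb] .
  have nl: "\<forall>x s. build d ?Ga a \<noteq> Lam x s" using q(5) by (cases a) auto
  show ?case using pl' IHa IHb hfa hfb nl by simp
qed

lemma S2_eq: "S2 n = Qset n"
proof
  show "S2 n \<subseteq> Qset n"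
  proof
    fix S assume "S \<in> S2 n"
    then obtain t where t: "S = skel t" "linear_term t" "normal_term t" "planar_term t"
      "two_connected_term t" "atoms t = n" by (auto simp: S2_def)
    have p: "planar_ctx [] t" using t(4) by (simp add: planar_term_def)
    have cl: "\<forall>x. occ x t = 0" using t(2) by (simp add: linear_term_def closed_term_def)
    have fv: "fv_ok t" using two_conn_fv_ok[OF cl t(5)] .
    have "qok (skel t)" using skel_qok[OF p t(3) fv] .
    moreover have "lab (skel t) = 0" using lab_skel[OF p] by simp
    moreover have "leaf_count (skel t) = n" using t(6) atoms_leaf by simp
    ultimately show "S \<in> Qset n" using t(1) by (simp add: Qset_def)
  qed
next
  show "Qset n \<subseteq> S2 n"
  proof
    fix S assume "S \<in> Qset n"
    then have S: "qok S" "lab S = 0" "leaf_count S = n" by (auto simp: Qset_def)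
    let ?t = "build 0 [] S"
    have b: "planar_ctx [] ?t" "skel ?t = S" "normal_term ?t" "fv_ok ?t"
      using build_ok[OF S(1), of "[]" 0] S(2) by auto
    have cl: "\<forall>x. occ x ?t = 0" using planar_occ[OF b(1)] by simp
    have lin: "linear_term ?t" using cl planar_linear[OF b(1)] by (simp add: linear_term_def closed_term_def)
    have tc: "two_connected_term ?t" using fv_ok_two_conn[OF cl b(4)] .
    have at: "atoms ?t = n" using atoms_leaf[of ?t] b(2) S(3) by simp
    show "S \<in> S2 n" unfolding S2_def using b lin tc at
      by (auto simp: planar_term_def intro!: exI[of _ ?t])
  qed
qed

theorem proposition11:
  fixes n :: nat
  assumes "n \<ge> 1"
  shows "bij_betw psi (S2 n) (Vplus (n - 1))"
  using psi_bij[OF assms] by (simp add: S2_eq)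

end
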